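(* Let $(\mathfrak g,[\cdot,\cdot],\llbracket\cdot,\cdot,\cdot\rrbracket)$ and $(\mathfrak g^*,[\cdot,\cdot]_*,\llbracket\cdot,\cdot,\cdot\rrbracket_* )$ be Lie-Yamaguti algebras (on a vector space and its dual). Then the quadruple $(\mathfrak g,\mathfrak g^*;(\mathrm{ad}^*,-\mathcal R^*\tau),(\mathfrak{ad}^*,-\mathfrak R^*\tau))$ is a matched pair of Lie-Yamaguti algebras (i.e. the double brackets below define a Lie-Yamaguti algebra on $\mathfrak g\oplus\mathfrak g^*$) if and only if there is a Lie-Yamaguti algebra structure on $\mathfrak g\oplus\mathfrak g^*$ for which $((\mathfrak g\oplus\mathfrak g^*,\mathcal B_0),\mathfrak g,\mathfrak g^* )$ is a Manin triple, where $\mathcal B_0(x+\xi,y+\eta)=\langle x,\eta\rangle+\langle\xi,y\rangle$ (in which case that structure is given by the double brackets).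
   Context: All vector spaces are finite-dimensional over a field of characteristic zero. A Lie-Yamaguti algebra is a vector space $\mathfrak g$ with a skew-symmetric bilinear map $[\cdot,\cdot]$ and a trilinear map $\llbracket\cdot,\cdot,\cdot\rrbracket$ skew-symmetric in its first two arguments satisfying: (LY1) $[[x,y],z]+[[y,z],x]+[[z,x],y]+\llbracket x,y,z\rrbracket+\llbracket y,z,x\rrbracket+\llbracket z,x,y\rrbracket=0$; (LY2) $\llbracket [x,y],z,w\rrbracket+\llbracket [y,z],x,w\rrbracket+\llbracket [z,x],y,w\rrbracket=0$; (LY3) $\llbracket x,y,[z,w]\rrbracket=[\llbracket x,y,z\rrbracket,w]+[z,\llbracket x,y,w\rrbracket]$; (LY4) $\llbracket x,y,\llbracket z,w,t\rrbracket\rrbracket=\llbracket\llbracket x,y,z\rrbracket,w,t\rrbracket+\llbracket z,\llbracket x,y,w\rrbracket,t\rrbracket+\llbracket z,w,\llbracket x,y,t\rrbracket\rrbracket$. Coadjoint maps: on $\mathfrak g^*$, $\langle\mathrm{ad}^*_x\alpha,z\rangle=-\langle\alpha,[x,z]\rangle$, $\langle\mathcal R^*(x,y)\alpha,z\rangle=-\langle\alpha,\llbracket z,x,y\rrbracket\rangle$, $\langle\mathcal L^*(x,y)\alpha,z\rangle=-\langle\alpha,\llbracket x,y,z\rrbracket\rangle$; on $\mathfrak g$, $\langle\mathfrak{ad}^*_\xi x,\eta\rangle=-\langle x,[\xi,\eta]_*\rangle$, $\langle\mathfrak R^*(\xi,\eta)x,\zeta\rangle=-\langle x,\llbracket\zeta,\xi,\eta\rrbracket_*\rangle$,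 $\langle\mathfrak L^*(\xi,\eta)x,\zeta\rangle=-\langle x,\llbracket\xi,\eta,\zeta\rrbracket_*\rangle$. ($-\mathcal R^*\tau$ means $(x,y)\mapsto-\mathcal R^*(y,x)$, similarly for $-\mathfrak R^*\tau$.) The double brackets on $\mathfrak g\oplus\mathfrak g^*$ are $[x+\xi,y+\eta]=[x,y]+\mathrm{ad}^*_x\eta-\mathrm{ad}^*_y\xi+[\xi,\eta]_*+\mathfrak{ad}^*_\xi y-\mathfrak{ad}^*_\eta x$ and $\llbracket x+\xi,y+\eta,z+\zeta\rrbracket=\llbracket x,y,z\rrbracket+\mathcal L^*(x,y)\zeta-\mathcal R^*(z,y)\xi+\mathcal R^*(z,x)\eta+\llbracket\xi,\eta,\zeta\rrbracket_*+\mathfrak L^*(\xi,\eta)z-\mathfrak R^*(\zeta,\eta)x+\mathfrak R^*(\zeta,\xi)y$; the quadruple is called a matched pair when these form a Lie-Yamaguti algebra. A quadratic Lie-Yamaguti algebra $(\mathfrak h,\mathcal B)$ is a Lie-Yamaguti algebra with a nondegenerate symmetric bilinear form with $\mathcal B([x,y],z)=-\mathcal B(y,[x,z])$ and $\mathcal B(\llbracket x,y,z\rrbracket,w)=\mathcal B(x,\llbracket w,z,y\rrbracket)$. A Manin triple $((\mathfrak h,\mathcal B),\mathfrak h_1,\mathfrak h_2)$ is a quadratic Lie-Yamaguti algebra with $\mathfrak h=\mathfrak h_1\oplus\mathfrak h_2$, where $\mathfrak h_1,\mathfrak h_2$ are isotropic subalgebras (carrying their given structures), and for all $x_1,y_1\in\mathfrak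 h_1$, $x_2,y_2\in\mathfrak h_2$: $\mathrm{pr}_1\llbracket x_1,y_1,x_2\rrbracket=\mathrm{pr}_1\llbracket x_1,x_2,y_1\rrbracket=\mathrm{pr}_2\llbracket x_2,y_2,x_1\rrbracket=\mathrm{pr}_2\llbracket x_2,x_1,y_2\rrbracket=0$ ($\mathrm{pr}_i$ the projections onto $\mathfrak h_i$). *)

theory Defs
  imports Main "HOL-Library.Function_Algebras" "HOL-Library.Product_Plus"
begin

text \<open>A finite-dimensional vector space over a field 'k of characteristic zero is modelled as
  'n \<Rightarrow> 'k with 'n a finite index type; its dual is identified with 'n \<Rightarrow> 'k via the
  nondegenerate pairing below.\<close>

definition vsc :: "'k::field \<Rightarrow> ('n \<Rightarrow> 'k) \<Rightarrow> ('n \<Rightarrow> 'k)" where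
  "vsc c x = (\<lambda>i. c * x i)"

definition psc :: "'k::field \<Rightarrow> ('n \<Rightarrow> 'k) \<times> ('n \<Rightarrow> 'k) \<Rightarrow> ('n \<Rightarrow> 'k) \<times> ('n \<Rightarrow> 'k)" where
  "psc c p = (vsc c (fst p), vsc c (snd p))"

definition pair :: "('n::finite \<Rightarrow> 'k::field) \<Rightarrow> ('n \<Rightarrow> 'k) \<Rightarrow> 'k" where
  "pair x \<xi> = (\<Sum>i\<in>UNIV. x i * \<xi> i)"

definition ebas :: "'n \<Rightarrow> ('n \<Rightarrow> 'k::field)" where
  "ebas j = (\<lambda>i. if i = j then 1 else 0)"

definition LY_bilinear :: "('k \<Rightarrow> 'v::ab_group_add \<Rightarrow> 'v) \<Rightarrow> ('v \<Rightarrow> 'v \<Rightarrow> 'v) \<Rightarrow> bool" where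
  "LY_bilinear sc b \<longleftrightarrow>
     (\<forall>x y z. b (x + y) z = b x z + b y z \<and> b z (x + y) = b z x + b z y) \<and>
     (\<forall>c x y. b (sc c x) y = sc c (b x y) \<and> b x (sc c y) = sc c (b x y))"

definition LY_trilinear :: "('k \<Rightarrow> 'v::ab_group_add \<Rightarrow> 'v) \<Rightarrow> ('v \<Rightarrow> 'v \<Rightarrow> 'v \<Rightarrow> 'v) \<Rightarrow> bool" where
  "LY_trilinear sc t \<longleftrightarrow>
     (\<forall>x y z w. t (x + y) z w = t x z w + t y z w \<and> t z (x + y) w = t z x w + t z y w
        \<and> t z w (x + y) = t z w x + t z w y) \<and>
     (\<forall>c x y z. t (sc c x) y z = sc c (t x y z) \<and> t x (sc c y) z = sc c (t x y z)
        \<and> t x y (sc c z) = sc c (t x y z))"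

definition LY_algebra :: "('k \<Rightarrow> 'v::ab_group_add \<Rightarrow> 'v) \<Rightarrow> ('v \<Rightarrow> 'v \<Rightarrow> 'v) \<Rightarrow> ('v \<Rightarrow> 'v \<Rightarrow> 'v \<Rightarrow> 'v) \<Rightarrow> bool" where
  "LY_algebra sc br tr \<longleftrightarrow>
     LY_bilinear sc br \<and> LY_trilinear sc tr \<and>
     (\<forall>x y. br x y = - br y x) \<and>
     (\<forall>x y z. tr x y z = - tr y x z) \<and>
     (\<forall>x y z. br (br x y) z + br (br y z) x + br (br z x) y
               + tr x y z + tr y z x + tr z x y = 0) \<and>
     (\<forall>x y z w. tr (br x y) z w + tr (br y z) x w + tr (br z x) y w = 0) \<and>
     (\<forall>x y z w. tr x y (br z w) = br (tr x y z) w + br z (tr x y w)) \<and>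
     (\<forall>x y z w t. tr x y (tr z w t) = tr (tr x y z) w t + tr z (tr x y w) t + tr z w (tr x y t))"

text \<open>coad br x \<alpha> is ad^*_x \<alpha>: its j-th coordinate is \<langle>ad^*_x \<alpha>, e_j\<rangle> = - \<langle>\<alpha>, [x, e_j]\<rangle>.
  The same definitions serve on both sides (g acting on g^* and g^* acting on g).\<close>

definition coad :: "(('n::finite \<Rightarrow> 'k::field) \<Rightarrow> ('n \<Rightarrow> 'k) \<Rightarrow> ('n \<Rightarrow> 'k)) \<Rightarrow> ('n \<Rightarrow> 'k) \<Rightarrow> ('n \<Rightarrow> 'k) \<Rightarrow> ('n \<Rightarrow> 'k)" where
  "coad br x \<alpha> = (\<lambda>j. - pair \<alpha> (br x (ebas j)))"

definition coR :: "(('n::finite \<Rightarrow> 'k::field) \<Rightarrow> ('n \<Rightarrow> 'k) \<Rightarrow> ('n \<Rightarrow> 'k) \<Rightarrow> ('n \<Rightarrow> 'k)) \<Rightarrow> ('n \<Rightarrow> 'k) \<Rightarrow> ('n \<Rightarrow> 'k) \<Rightarrow> ('n \<Rightarrow> 'k) \<Rightarrow> ('n \<Rightarrow> 'k)" where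
  "coR tr x y \<alpha> = (\<lambda>j. - pair \<alpha> (tr (ebas j) x y))"

definition coL :: "(('n::finite \<Rightarrow> 'k::field) \<Rightarrow> ('n \<Rightarrow> 'k) \<Rightarrow> ('n \<Rightarrow> 'k) \<Rightarrow> ('n \<Rightarrow> 'k)) \<Rightarrow> ('n \<Rightarrow> 'k) \<Rightarrow> ('n \<Rightarrow> 'k) \<Rightarrow> ('n \<Rightarrow> 'k) \<Rightarrow> ('n \<Rightarrow> 'k)" where
  "coL tr x y \<alpha> = (\<lambda>j. - pair \<alpha> (tr x y (ebas j)))"

definition dbr :: "(('n::finite \<Rightarrow> 'k::field) \<Rightarrow> ('n \<Rightarrow> 'k) \<Rightarrow> ('n \<Rightarrow> 'k)) \<Rightarrow> (('n \<Rightarrow> 'k) \<Rightarrow> ('n \<Rightarrow> 'k) \<Rightarrow> ('n \<Rightarrow> 'k))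
     \<Rightarrow> ('n \<Rightarrow> 'k) \<times> ('n \<Rightarrow> 'k) \<Rightarrow> ('n \<Rightarrow> 'k) \<times> ('n \<Rightarrow> 'k) \<Rightarrow> ('n \<Rightarrow> 'k) \<times> ('n \<Rightarrow> 'k)" where
  "dbr br brs p q =
     (let x = fst p; \<xi> = snd p; y = fst q; \<eta> = snd q in
      (br x y + coad brs \<xi> y - coad brs \<eta> x,
       coad br x \<eta> - coad br y \<xi> + brs \<xi> \<eta>))"

definition dtr :: "(('n::finite \<Rightarrow> 'k::field) \<Rightarrow> ('n \<Rightarrow> 'k) \<Rightarrow> ('n \<Rightarrow> 'k) \<Rightarrow> ('n \<Rightarrow> 'k)) \<Rightarrow> (('n \<Rightarrow> 'k) \<Rightarrow> ('n \<Rightarrow> 'k) \<Rightarrow> ('n \<Rightarrow> 'k) \<Rightarrow> ('n \<Rightarrow> 'k))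
     \<Rightarrow> ('n \<Rightarrow> 'k) \<times> ('n \<Rightarrow> 'k) \<Rightarrow> ('n \<Rightarrow> 'k) \<times> ('n \<Rightarrow> 'k) \<Rightarrow> ('n \<Rightarrow> 'k) \<times> ('n \<Rightarrow> 'k) \<Rightarrow> ('n \<Rightarrow> 'k) \<times> ('n \<Rightarrow> 'k)" where
  "dtr tr trs p q r =
     (let x = fst p; \<xi> = snd p; y = fst q; \<eta> = snd q; z = fst r; \<zeta> = snd r in
      (tr x y z + coL trs \<xi> \<eta> z - coR trs \<zeta> \<eta> x + coR trs \<zeta> \<xi> y,
       coL tr x y \<zeta> - coR tr z y \<xi> + coR tr z x \<eta> + trs \<xi> \<eta> \<zeta>))"

definition matched_pair_dual :: "(('n::finite \<Rightarrow> 'k::field) \<Rightarrow> ('n \<Rightarrow> 'k) \<Rightarrow> ('n \<Rightarrow> 'k)) \<Rightarrow> (('n \<Rightarrow> 'k) \<Rightarrow> ('n \<Rightarrow> 'k) \<Rightarrow> ('n \<Rightarrow> 'k) \<Rightarrow> ('n \<Rightarrow> 'k)) \<Rightarrow> (('n \<Rightarrow> 'k) \<Rightarrow> ('n \<Rightarrow> 'k) \<Rightarrow> ('n \<Rightarrow> 'k)) \<Rightarrow> (('n \<Rightarrow> 'k) \<Rightarrow> ('n \<Rightarrow> 'k) \<Rightarrow> ('n \<Rightarrow> 'k) \<Rightarrow> ('n \<Rightarrow> 'k)) \<Rightarrow> bool" where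
  "matched_pair_dual br tr brs trs \<longleftrightarrow> LY_algebra psc (dbr br brs) (dtr tr trs)"

definition B0 :: "('n::finite \<Rightarrow> 'k::field) \<times> ('n \<Rightarrow> 'k) \<Rightarrow> ('n \<Rightarrow> 'k) \<times> ('n \<Rightarrow> 'k) \<Rightarrow> 'k" where
  "B0 p q = pair (fst p) (snd q) + pair (fst q) (snd p)"

definition quadratic_LY :: "('k::field \<Rightarrow> 'v::ab_group_add \<Rightarrow> 'v) \<Rightarrow> ('v \<Rightarrow> 'v \<Rightarrow> 'v) \<Rightarrow> ('v \<Rightarrow> 'v \<Rightarrow> 'v \<Rightarrow> 'v)
     \<Rightarrow> ('v \<Rightarrow> 'v \<Rightarrow> 'k) \<Rightarrow> bool" where
  "quadratic_LY sc br tr B \<longleftrightarrow>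
     LY_algebra sc br tr \<and>
     (\<forall>x y z. B (x + y) z = B x z + B y z) \<and> (\<forall>c x y. B (sc c x) y = c * B x y) \<and>
     (\<forall>x y. B x y = B y x) \<and>
     (\<forall>x. (\<forall>y. B x y = 0) \<longrightarrow> x = 0) \<and>
     (\<forall>x y z. B (br x y) z = - B y (br x z)) \<and>
     (\<forall>x y z w. B (tr x y z) w = B x (tr w z y))"

text \<open>Manin triple ((g \<oplus> g^*, B0), g, g^*) for a LY structure (br3, tr3) on g \<oplus> g^*,
  where g = {(x,0)} and g^* = {(0,\<xi>)} are isotropic subalgebras carrying their given structures.\<close>

definition manin_triple_dual :: "(('n::finite \<Rightarrow> 'k::field) \<Rightarrow> ('n \<Rightarrow> 'k) \<Rightarrow> ('n \<Rightarrow> 'k)) \<Rightarrow> (('n \<Rightarrow> 'k) \<Rightarrow> ('n \<Rightarrow> 'k) \<Rightarrow> ('n \<Rightarrow> 'k) \<Rightarrow> ('n \<Rightarrow> 'k)) \<Rightarrow> (('n \<Rightarrow> 'k) \<Rightarrow> ('n \<Rightarrow> 'k) \<Rightarrow> ('n \<Rightarrow> 'k)) \<Rightarrow> (('n \<Rightarrow> 'k) \<Rightarrow> ('n \<Rightarrow> 'k) \<Rightarrow> ('n \<Rightarrow> 'k) \<Rightarrow> ('n \<Rightarrow> 'k)) \<Rightarrow> ((('n \<Rightarrow> 'k) \<times> ('n \<Rightarrow> 'k)) \<Rightarrow> (('n \<Rightarrow> 'k) \<times> ('n \<Rightarrow> 'k)) \<Rightarrow> (('n \<Rightarrow> 'k)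 \<times> ('n \<Rightarrow> 'k))) \<Rightarrow> ((('n \<Rightarrow> 'k) \<times> ('n \<Rightarrow> 'k)) \<Rightarrow> (('n \<Rightarrow> 'k) \<times> ('n \<Rightarrow> 'k)) \<Rightarrow> (('n \<Rightarrow> 'k) \<times> ('n \<Rightarrow> 'k)) \<Rightarrow> (('n \<Rightarrow> 'k) \<times> ('n \<Rightarrow> 'k))) \<Rightarrow> bool" where
  "manin_triple_dual br tr brs trs br3 tr3 \<longleftrightarrow>
     quadratic_LY psc br3 tr3 B0 \<and>
     (\<forall>x y. B0 (x, 0::'n \<Rightarrow> 'k) (y, 0) = (0::'k)) \<and> (\<forall>\<xi> \<eta>. B0 (0::'n \<Rightarrow> 'k, \<xi>) (0, \<eta>) = (0::'k)) \<and>
     (\<forall>x y. br3 (x, 0) (y, 0) = (br x y, 0)) \<and>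
     (\<forall>x y z. tr3 (x, 0) (y, 0) (z, 0) = (tr x y z, 0)) \<and>
     (\<forall>\<xi> \<eta>. br3 (0, \<xi>) (0, \<eta>) = (0, brs \<xi> \<eta>)) \<and>
     (\<forall>\<xi> \<eta> \<zeta>. tr3 (0, \<xi>) (0, \<eta>) (0, \<zeta>) = (0, trs \<xi> \<eta> \<zeta>)) \<and>
     (\<forall>x1 y1 x2. fst (tr3 (x1, 0) (y1, 0) (0, x2)) = 0) \<and>
     (\<forall>x1 y1 x2. fst (tr3 (x1, 0) (0, x2) (y1, 0)) = 0) \<and>
     (\<forall>x1 x2 y2. snd (tr3 (0, x2) (0, y2) (x1, 0)) = 0) \<and>
     (\<forall>x1 x2 y2. snd (tr3 (0, x2) (x1, 0) (0, y2)) = 0)"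

end

theory Submission imports Defs begin

lemma sum_fun_apply: "finite A \<Longrightarrow> (\<Sum>j\<in>A. g j) i = (\<Sum>j\<in>A. (g j) i)"
  by (induction A rule: finite_induct) simp_all

lemma pair_comm: "pair x \<xi> = pair \<xi> x"
  unfolding pair_def by (simp add: mult.commute)
lemma pair_add1[simp]: "pair (x + y) \<xi> = pair x \<xi> + pair y \<xi>"
  unfolding pair_def by (simp add: distrib_right sum.distrib)
lemma pair_add2[simp]: "pair \<xi> (x + y) = pair \<xi> x + pair \<xi> y"
  unfolding pair_def by (simp add: distrib_left sum.distrib)
lemma pair_neg1[simp]: "pair (- x) \<xi> = - pair x \<xi>"
  unfolding pair_def by (simp add: sum_negf)
lemma pair_neg2[simp]: "pair \<xi> (- x) = - pair \<xi> x"
  unfolding pair_def by (simp add: sum_negf)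
lemma pair_diff1[simp]: "pair (x - y) \<xi> = pair x \<xi> - pair y \<xi>"
  unfolding pair_def by (simp add: left_diff_distrib sum_subtractf)
lemma pair_diff2[simp]: "pair \<xi> (x - y) = pair \<xi> x - pair \<xi> y"
  unfolding pair_def by (simp add: right_diff_distrib sum_subtractf)
lemma pair_zero1[simp]: "pair 0 \<xi> = 0" unfolding pair_def by simp
lemma pair_zero2[simp]: "pair \<xi> 0 = 0" unfolding pair_def by simp
lemma pair_vsc1[simp]: "pair (vsc c x) \<xi> = c * pair x \<xi>"
  unfolding pair_def vsc_def by (simp add: sum_distrib_left mult.assoc)
lemma pair_vsc2[simp]: "pair \<xi> (vsc c x) = c * pair \<xi> x"
  unfolding pair_def vsc_def by (simp add: sum_distrib_left mult.left_commute)
lemma pair_ebas2[simp]: "pair x (ebas j) = x j"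
  unfolding pair_def ebas_def by (simp add: if_distrib cong: if_cong)
lemma pair_ebas1[simp]: "pair (ebas j) x = x j"
  using pair_ebas2 pair_comm by metis

lemma pair_sum2: "finite A \<Longrightarrow> pair \<alpha> (\<Sum>j\<in>A. g j) = (\<Sum>j\<in>A. pair \<alpha> (g j))"
  proof (induction A rule: finite_induct)
    case (insert x F) then show ?case by (metis sum.insert pair_add2)
  qed (metis sum.empty pair_zero2)

lemma lin_pair:
  fixes f :: "('n::finite \<Rightarrow> 'k::field) \<Rightarrow> ('n \<Rightarrow> 'k)"
  assumes add: "\<And>x y. f (x + y) = f x + f y" and sc: "\<And>c x. f (vsc c x) = vsc c (f x)"
  shows "pair \<alpha> (f z) = (\<Sum>j\<in>UNIV. z j * pair \<alpha> (f (ebas j)))"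
proof -
  have f0: "f 0 = 0" using add[of 0 0] by simp
  have fs: "f (\<Sum>j\<in>A. g j) = (\<Sum>j\<in>A. f (g j))" if "finite A" for A g
    using that proof (induction A rule: finite_induct)
    case (insert x F) then show ?case by (metis sum.insert add)
  qed (metis sum.empty f0)
  have z: "z = (\<Sum>j\<in>UNIV. vsc (z j) (ebas j))"
    by (rule ext) (simp add: sum_fun_apply vsc_def ebas_def if_distrib cong: if_cong)
  have "pair \<alpha> (f z) = pair \<alpha> (\<Sum>j\<in>UNIV. vsc (z j) (f (ebas j)))"
    by (subst z) (simp add: fs sc)
  also have "\<dots> = (\<Sum>j\<in>UNIV. z j * pair \<alpha> (f (ebas j)))"
    by (simp add: pair_sum2)
  finally show ?thesis .
qed


locale LYa =
  fixes br :: "('n::finite \<Rightarrow> 'k::field) \<Rightarrow> ('n \<Rightarrow> 'k) \<Rightarrow> ('n \<Rightarrow> 'k)"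
    and tr :: "('n \<Rightarrow> 'k) \<Rightarrow> ('n \<Rightarrow> 'k) \<Rightarrow> ('n \<Rightarrow> 'k) \<Rightarrow> ('n \<Rightarrow> 'k)"
  assumes LY: "LY_algebra vsc br tr"
begin

lemma br_add1: "br (x + y) z = br x z + br y z"
  using LY unfolding LY_algebra_def LY_bilinear_def LY_trilinear_def by metis
lemma br_add2: "br z (x + y) = br z x + br z y"
  using LY unfolding LY_algebra_def LY_bilinear_def LY_trilinear_def by metis
lemma br_sc2: "br x (vsc c y) = vsc c (br x y)"
  using LY unfolding LY_algebra_def LY_bilinear_def LY_trilinear_def by metis
lemma br_skew: "br x y = - br y x"
  using LY unfolding LY_algebra_def LY_bilinear_def LY_trilinear_def by metis
lemma tr_add3: "tr z w (x + y) = tr z w x + tr z w y"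
  using LY unfolding LY_algebra_def LY_bilinear_def LY_trilinear_def by metis
lemma tr_add1: "tr (x + y) z w = tr x z w + tr y z w"
  using LY unfolding LY_algebra_def LY_bilinear_def LY_trilinear_def by metis
lemma tr_add2: "tr z (x + y) w = tr z x w + tr z y w"
  using LY unfolding LY_algebra_def LY_bilinear_def LY_trilinear_def by metis
lemma tr_sc3: "tr x y (vsc c z) = vsc c (tr x y z)"
  using LY unfolding LY_algebra_def LY_bilinear_def LY_trilinear_def by metis
lemma tr_sc1: "tr (vsc c x) y z = vsc c (tr x y z)"
  using LY unfolding LY_algebra_def LY_bilinear_def LY_trilinear_def by metis

lemma tr_skew: "tr x y z = - tr y x z"
  using LY unfolding LY_algebra_def by metis

lemma br_zero1: "br 0 y = 0" using br_add1[of 0 0 y] by simp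
lemma br_zero2: "br y 0 = 0" using br_add2[of y 0 0] by simp
lemma tr_zero1: "tr 0 y z = 0" using tr_add1[of 0 0 y z] by simp
lemma tr_zero2: "tr y 0 z = 0" using tr_add2[of y 0 0 z] by simp
lemma tr_zero3: "tr y z 0 = 0" using tr_add3[of y z 0 0] by simp

lemma coad_gen: "pair z (coad br x \<eta>) = - pair \<eta> (br x z)"
proof -
  have "pair \<eta> (br x z) = (\<Sum>j\<in>UNIV. z j * pair \<eta> (br x (ebas j)))"
    using lin_pair[of "br x", OF br_add2 br_sc2] .
  then show ?thesis unfolding coad_def pair_def by (simp add: sum_negf)
qed

lemma coL_gen: "pair z (coL tr x y \<alpha>) = - pair \<alpha> (tr x y z)"
proof -
  have "pair \<alpha> (tr x y z) = (\<Sum>j\<in>UNIV. z j * pair \<alpha> (tr x y (ebas j)))"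
    using lin_pair[of "tr x y", OF tr_add3 tr_sc3] .
  then show ?thesis unfolding coL_def pair_def by (simp add: sum_negf)
qed

lemma coR_gen: "pair z (coR tr x y \<alpha>) = - pair \<alpha> (tr z x y)"
proof -
  have "pair \<alpha> (tr z x y) = (\<Sum>j\<in>UNIV. z j * pair \<alpha> (tr (ebas j) x y))"
    using lin_pair[of "\<lambda>z. tr z x y", OF tr_add1 tr_sc1] .
  then show ?thesis unfolding coR_def pair_def by (simp add: sum_negf)
qed

lemma coad_zero1: "coad br 0 \<alpha> = 0"
  unfolding coad_def by (rule ext) (simp add: br_zero1)
lemma coad_zero2: "coad br x 0 = 0"
  unfolding coad_def by (rule ext) simp
lemma coL_zero: "coL tr 0 y \<alpha> = 0" "coL tr x 0 \<alpha> = 0" "coL tr x y 0 = 0"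
  unfolding coL_def by (rule ext, simp add: tr_zero1 tr_zero2)+
lemma coR_zero: "coR tr 0 y \<alpha> = 0" "coR tr x 0 \<alpha> = 0" "coR tr x y 0 = 0"
  unfolding coR_def by (rule ext, simp add: tr_zero2 tr_zero3)+

end


lemma B0_sym: "B0 p q = B0 q p" unfolding B0_def by (simp add: add.commute)
lemma B0_P2[simp]: "B0 A (w, 0) = pair w (snd A)" unfolding B0_def by simp
lemma B0_D2[simp]: "B0 A (0, \<omega>) = pair (fst A) \<omega>" unfolding B0_def by (simp add: pair_comm)
lemma B0_P1[simp]: "B0 (w, 0) A = pair w (snd A)" unfolding B0_def by (simp add: pair_comm)
lemma B0_D1[simp]: "B0 (0, \<omega>) A = pair (fst A) \<omega>" unfolding B0_def by (simp add: pair_comm)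
lemma B0_add1[simp]: "B0 (A + C) w = B0 A w + B0 C w" unfolding B0_def by simp
lemma B0_add2[simp]: "B0 w (A + C) = B0 w A + B0 w C" unfolding B0_def by simp
lemma B0_neg1[simp]: "B0 (- A) w = - B0 A w" unfolding B0_def by simp
lemma B0_neg2[simp]: "B0 w (- A) = - B0 w A" unfolding B0_def by simp
lemma B0_ext: assumes "\<And>w. B0 A w = B0 C w" shows "A = C"
proof -
  have "fst A = fst C"
  proof
    fix j show "fst A j = fst C j" using assms[of "(0, ebas j)"] by simp
  qed
  moreover have "snd A = snd C"
  proof
    fix j show "snd A j = snd C j" using assms[of "(ebas j, 0)"] by simp
  qed
  ultimately show ?thesis by (simp add: prod_eq_iff)
qed

lemma split_pair: "(x::'a::monoid_add, \<xi>::'b::monoid_add) = (x, 0) + (0, \<xi>)" by (simp only: add_Pair add.right_neutral add.left_neutral)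

locale LY2 = g: LYa br tr + d: LYa brs trs
  for br :: "('n::finite \<Rightarrow> 'k::field) \<Rightarrow> ('n \<Rightarrow> 'k) \<Rightarrow> ('n \<Rightarrow> 'k)"
    and tr :: "('n \<Rightarrow> 'k) \<Rightarrow> ('n \<Rightarrow> 'k) \<Rightarrow> ('n \<Rightarrow> 'k) \<Rightarrow> ('n \<Rightarrow> 'k)"
    and brs :: "('n \<Rightarrow> 'k) \<Rightarrow> ('n \<Rightarrow> 'k) \<Rightarrow> ('n \<Rightarrow> 'k)"
    and trs :: "('n \<Rightarrow> 'k) \<Rightarrow> ('n \<Rightarrow> 'k) \<Rightarrow> ('n \<Rightarrow> 'k) \<Rightarrow> ('n \<Rightarrow> 'k)"
begin

lemma coad_g[simp]: "pair z (coad br x \<eta>) = - pair (br x z) \<eta>"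
  using g.coad_gen[of z x \<eta>] pair_comm[of \<eta> "br x z"] by simp
lemma coad_d[simp]: "pair (coad brs \<xi> y) \<zeta> = - pair y (brs \<xi> \<zeta>)"
  using d.coad_gen[of \<zeta> \<xi> y] pair_comm[of "coad brs \<xi> y" \<zeta>] by simp
lemma coL_g[simp]: "pair z (coL tr x y \<alpha>) = - pair (tr x y z) \<alpha>"
  using g.coL_gen[of z x y \<alpha>] pair_comm[of \<alpha> "tr x y z"] by simp
lemma coL_d[simp]: "pair (coL trs \<xi> \<eta> z) \<omega> = - pair z (trs \<xi> \<eta> \<omega>)"
  using d.coL_gen[of \<omega> \<xi> \<eta> z] pair_comm[of "coL trs \<xi> \<eta> z" \<omega>] by simp
lemma coR_g[simp]: "pair z (coR tr x y \<alpha>) = - pair (tr z x y) \<alpha>"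
  using g.coR_gen[of z x y \<alpha>] pair_comm[of \<alpha> "tr z x y"] by simp
lemma coR_d[simp]: "pair (coR trs \<zeta> \<eta> x) \<omega> = - pair x (trs \<omega> \<zeta> \<eta>)"
  using d.coR_gen[of \<omega> \<zeta> \<eta> x] pair_comm[of "coR trs \<zeta> \<eta> x" \<omega>] by simp

definition "Ebr x \<xi> y \<eta> z \<zeta> = pair (br x y) \<zeta> - pair y (brs \<xi> \<zeta>) + pair x (brs \<eta> \<zeta>)
   - pair (br x z) \<eta> + pair (br y z) \<xi> + pair z (brs \<xi> \<eta>)"

definition "Etr x \<xi> y \<eta> z \<zeta> w \<omega> = pair (tr x y z) \<omega> - pair z (trs \<xi> \<eta> \<omega>) + pair x (trs \<omega> \<zeta> \<eta>)
   - pair y (trs \<omega> \<zeta> \<xi>) - pair (tr x y w) \<zeta> + pair (tr w z y) \<xi> - pair (tr w z x) \<eta> + pair w (trs \<xi> \<eta> \<zeta>)"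

lemma dbr_B0: "B0 (dbr br brs (x, \<xi>) (y, \<eta>)) (z, \<zeta>) = Ebr x \<xi> y \<eta> z \<zeta>"
  unfolding B0_def dbr_def Let_def Ebr_def apply simp done

lemma dtr_B0: "B0 (dtr tr trs (x, \<xi>) (y, \<eta>) (z, \<zeta>)) (w, \<omega>) = Etr x \<xi> y \<eta> z \<zeta> w \<omega>"
  unfolding B0_def dtr_def Let_def Etr_def apply simp done

lemma manin_br:
  assumes M: "manin_triple_dual br tr brs trs br3 tr3"
  shows "B0 (br3 (x, \<xi>) (y, \<eta>)) (z, \<zeta>) = Ebr x \<xi> y \<eta> z \<zeta>"
proof -
  have add1: "\<And>p q r. br3 (p+q) r = br3 p r + br3 q r"
    using M unfolding manin_triple_dual_def quadratic_LY_def LY_algebra_def LY_bilinear_def by metis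
  have add2: "\<And>p q r. br3 r (p+q) = br3 r p + br3 r q"
    using M unfolding manin_triple_dual_def quadratic_LY_def LY_algebra_def LY_bilinear_def by metis
  have skew: "\<And>p q. br3 p q = - br3 q p"
    using M unfolding manin_triple_dual_def quadratic_LY_def LY_algebra_def by metis
  have inv: "\<And>p q r. B0 (br3 p q) r = - B0 q (br3 p r)"
    using M unfolding manin_triple_dual_def quadratic_LY_def by metis
  have rg: "\<And>x y. br3 (x,0) (y,0) = (br x y, 0)"
    using M unfolding manin_triple_dual_def by metis
  have rd: "\<And>\<xi> \<eta>. br3 (0,\<xi>) (0,\<eta>) = (0, brs \<xi> \<eta>)"
    using M unfolding manin_triple_dual_def by metis
  have e1: "B0 (br3 (x,0) (y,0)) (z,\<zeta>) = pair (br x y) \<zeta>" by (simp add: rg B0_def)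
  have e2: "B0 (br3 (a,0) (0,\<eta>')) (c,\<zeta>') = - pair (br a c) \<eta>' + pair a (brs \<eta>' \<zeta>')" for a c \<eta>' \<zeta>'
  proof -
    have a: "B0 (br3 (a,0) (0,\<eta>')) (c,0) = - pair (br a c) \<eta>'"
      using inv[of "(a,0)" "(0,\<eta>')" "(c,0)"] by (simp add: rg)
    have b: "B0 (br3 (a,0) (0,\<eta>')) (0,\<zeta>') = pair a (brs \<eta>' \<zeta>')"
      using skew[of "(a,0)" "(0,\<eta>')"] inv[of "(0,\<eta>')" "(a,0)" "(0,\<zeta>')"] by (simp add: rd)
    show ?thesis using a b by (simp add: B0_def)
  qed
  have e3: "B0 (br3 (0,\<xi>) (y,0)) (z,\<zeta>) = pair (br y z) \<xi> - pair y (brs \<xi> \<zeta>)"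
    using skew[of "(0,\<xi>)" "(y,0)"] e2[of y \<xi> z \<zeta>] by simp
  have e4: "B0 (br3 (0,\<xi>) (0,\<eta>)) (z,\<zeta>) = pair z (brs \<xi> \<eta>)" by (simp add: rd B0_def)
  have "br3 (x,\<xi>) (y,\<eta>) = br3 ((x,0)+(0,\<xi>)) ((y,0)+(0,\<eta>))"
    by (simp only: split_pair[of x \<xi>, symmetric] split_pair[of y \<eta>, symmetric])
  also have "\<dots> = br3 (x,0) (y,0) + br3 (x,0) (0,\<eta>) + (br3 (0,\<xi>) (y,0) + br3 (0,\<xi>) (0,\<eta>))"
    by (simp only: add1 add2 add_ac)
  finally have ex: "br3 (x,\<xi>) (y,\<eta>) = \<dots>" .
  show ?thesis unfolding ex B0_add1 e1 e2 e3 e4 Ebr_def by (simp add: algebra_simps)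
qed

lemma manin_tr:
  assumes M: "manin_triple_dual br tr brs trs br3 tr3"
  shows "B0 (tr3 (x, \<xi>) (y, \<eta>) (z, \<zeta>)) (w, \<omega>) = Etr x \<xi> y \<eta> z \<zeta> w \<omega>"
proof -
  have add1: "\<And>p q r s. tr3 (p+q) r s = tr3 p r s + tr3 q r s"
    using M unfolding manin_triple_dual_def quadratic_LY_def LY_algebra_def LY_trilinear_def by metis
  have add2: "\<And>p q r s. tr3 r (p+q) s = tr3 r p s + tr3 r q s"
    using M unfolding manin_triple_dual_def quadratic_LY_def LY_algebra_def LY_trilinear_def by metis
  have add3: "\<And>p q r s. tr3 r s (p+q) = tr3 r s p + tr3 r s q"
    using M unfolding manin_triple_dual_def quadratic_LY_def LY_algebra_def LY_trilinear_def by metis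
  have skew: "\<And>p q r. tr3 p q r = - tr3 q p r"
    using M unfolding manin_triple_dual_def quadratic_LY_def LY_algebra_def by metis
  have inv: "\<And>p q r s. B0 (tr3 p q r) s = B0 p (tr3 s r q)"
    using M unfolding manin_triple_dual_def quadratic_LY_def by metis
  have tg: "\<And>x y z. tr3 (x,0) (y,0) (z,0) = (tr x y z, 0)"
    using M unfolding manin_triple_dual_def by metis
  have td: "\<And>\<xi> \<eta> \<zeta>. tr3 (0,\<xi>) (0,\<eta>) (0,\<zeta>) = (0, trs \<xi> \<eta> \<zeta>)"
    using M unfolding manin_triple_dual_def by metis
  have pr1: "\<And>x1 y1 x2. fst (tr3 (x1, 0) (y1, 0) (0, x2)) = 0"
    using M unfolding manin_triple_dual_def by metis
  have pr2: "\<And>x1 y1 x2. fst (tr3 (x1, 0) (0, x2) (y1, 0)) = 0"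
    using M unfolding manin_triple_dual_def by metis
  have pr3: "\<And>x1 x2 y2. snd (tr3 (0, x2) (0, y2) (x1, 0)) = 0"
    using M unfolding manin_triple_dual_def by metis
  have pr4: "\<And>x1 x2 y2. snd (tr3 (0, x2) (x1, 0) (0, y2)) = 0"
    using M unfolding manin_triple_dual_def by metis
  have t1: "B0 (tr3 (a,0) (b,0) (c,0)) (d,\<delta>) = pair (tr a b c) \<delta>" for a b c d \<delta>
    by (simp add: tg B0_def)
  have t5: "B0 (tr3 (0,a) (0,b) (0,c)) (d,\<delta>) = pair d (trs a b c)" for a b c d \<delta>
    by (simp add: td B0_def)
  have t2: "B0 (tr3 (a,0) (b,0) (0,c)) (d,\<delta>) = - pair (tr a b d) c" for a b c d \<delta>
  proof -
    have "pair d (snd (tr3 (a,0) (b,0) (0,c))) = B0 (tr3 (a,0) (b,0) (0,c)) (d,0)" by simp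
    also have "\<dots> = B0 (a,0) (tr3 (d,0) (0,c) (b,0))" by (rule inv)
    also have "\<dots> = B0 (tr3 (d,0) (0,c) (b,0)) (a,0)" by (rule B0_sym)
    also have "\<dots> = - B0 (tr3 (0,c) (d,0) (b,0)) (a,0)" by (subst skew) simp
    also have "\<dots> = - B0 (0,c) (tr3 (a,0) (b,0) (d,0))" by (simp only: inv)
    also have "\<dots> = - pair (tr a b d) c" by (simp add: tg)
    finally show ?thesis by (simp add: B0_def pr1)
  qed
  have t3: "B0 (tr3 (a,0) (0,b) (c,0)) (d,\<delta>) = - pair (tr d c a) b" for a b c d \<delta>
  proof -
    have "pair d (snd (tr3 (a,0) (0,b) (c,0))) = B0 (tr3 (a,0) (0,b) (c,0)) (d,0)" by simp
    also have "\<dots> = B0 (a,0) (tr3 (d,0) (c,0) (0,b))" by (rule inv)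
    also have "\<dots> = B0 (tr3 (d,0) (c,0) (0,b)) (a,0)" by (rule B0_sym)
    also have "\<dots> = - pair (tr d c a) b" by (rule t2)
    finally show ?thesis by (simp add: B0_def pr2)
  qed
  have t4: "B0 (tr3 (0,a) (b,0) (c,0)) (d,\<delta>) = pair (tr d c b) a" for a b c d \<delta>
    using skew[of "(0,a)" "(b,0)" "(c,0)"] t3[of b a c d \<delta>] by simp
  have t6: "B0 (tr3 (0,a) (0,b) (c,0)) (d,\<delta>) = - pair c (trs a b \<delta>)" for a b c d \<delta>
  proof -
    have "pair (fst (tr3 (0,a) (0,b) (c,0))) \<delta> = B0 (tr3 (0,a) (0,b) (c,0)) (0,\<delta>)" by simp
    also have "\<dots> = B0 (0,a) (tr3 (0,\<delta>) (c,0) (0,b))" by (rule inv)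
    also have "\<dots> = - B0 (0,a) (tr3 (c,0) (0,\<delta>) (0,b))" by (subst skew) simp
    also have "\<dots> = - B0 (tr3 (c,0) (0,\<delta>) (0,b)) (0,a)" by (simp only: B0_sym[of "(0,a)"])
    also have "\<dots> = - B0 (c,0) (tr3 (0,a) (0,b) (0,\<delta>))" by (simp only: inv)
    also have "\<dots> = - pair c (trs a b \<delta>)" by (simp add: td)
    finally show ?thesis by (simp add: B0_def pr3)
  qed
  have t7: "B0 (tr3 (0,a) (b,0) (0,c)) (d,\<delta>) = - pair b (trs \<delta> c a)" for a b c d \<delta>
  proof -
    have "pair (fst (tr3 (0,a) (b,0) (0,c))) \<delta> = B0 (tr3 (0,a) (b,0) (0,c)) (0,\<delta>)" by simp
    also have "\<dots> = B0 (0,a) (tr3 (0,\<delta>) (0,c) (b,0))" by (rule inv)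
    also have "\<dots> = B0 (tr3 (0,\<delta>) (0,c) (b,0)) (0,a)" by (rule B0_sym)
    also have "\<dots> = - pair b (trs \<delta> c a)" by (rule t6)
    finally show ?thesis by (simp add: B0_def pr4)
  qed
  have t8: "B0 (tr3 (a,0) (0,b) (0,c)) (d,\<delta>) = pair a (trs \<delta> c b)" for a b c d \<delta>
    using skew[of "(a,0)" "(0,b)" "(0,c)"] t7[of b a c d \<delta>] by simp
  have "tr3 (x,\<xi>) (y,\<eta>) (z,\<zeta>) = tr3 ((x,0)+(0,\<xi>)) ((y,0)+(0,\<eta>)) ((z,0)+(0,\<zeta>))"
    by (simp only: split_pair[of x \<xi>, symmetric] split_pair[of y \<eta>, symmetric] split_pair[of z \<zeta>, symmetric])
  also have "\<dots> = tr3 (x,0) (y,0) (z,0) + tr3 (x,0) (y,0) (0,\<zeta>) + (tr3 (x,0) (0,\<eta>) (z,0) + tr3 (x,0) (0,\<eta>) (0,\<zeta>))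
      + (tr3 (0,\<xi>) (y,0) (z,0) + tr3 (0,\<xi>) (y,0) (0,\<zeta>) + (tr3 (0,\<xi>) (0,\<eta>) (z,0) + tr3 (0,\<xi>) (0,\<eta>) (0,\<zeta>)))"
    by (simp only: add1 add2 add3 add_ac)
  finally have ex: "tr3 (x,\<xi>) (y,\<eta>) (z,\<zeta>) = \<dots>" .
  show ?thesis unfolding ex B0_add1 t1 t2 t3 t4 t5 t6 t7 t8 Etr_def by (simp add: algebra_simps)
qed

lemma manin_unique:
  assumes M: "manin_triple_dual br tr brs trs br3 tr3"
  shows "br3 = dbr br brs \<and> tr3 = dtr tr trs"
proof
  show "br3 = dbr br brs"
  proof (intro ext)
    fix p q :: "('n \<Rightarrow> 'k) \<times> ('n \<Rightarrow> 'k)"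
    obtain x \<xi> y \<eta> where pq: "p = (x,\<xi>)" "q = (y,\<eta>)" by fastforce
    show "br3 p q = dbr br brs p q"
    proof (rule B0_ext)
      fix w :: "('n \<Rightarrow> 'k) \<times> ('n \<Rightarrow> 'k)"
      obtain z \<zeta> where "w = (z,\<zeta>)" by fastforce
      then show "B0 (br3 p q) w = B0 (dbr br brs p q) w"
        using pq manin_br[OF M] dbr_B0 by simp
    qed
  qed
  show "tr3 = dtr tr trs"
  proof (intro ext)
    fix p q r :: "('n \<Rightarrow> 'k) \<times> ('n \<Rightarrow> 'k)"
    obtain x \<xi> y \<eta> z \<zeta> where pq: "p = (x,\<xi>)" "q = (y,\<eta>)" "r = (z,\<zeta>)" by fastforce
    show "tr3 p q r = dtr tr trs p q r"
    proof (rule B0_ext)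
      fix w :: "('n \<Rightarrow> 'k) \<times> ('n \<Rightarrow> 'k)"
      obtain u \<omega> where "w = (u,\<omega>)" by fastforce
      then show "B0 (tr3 p q r) w = B0 (dtr tr trs p q r) w"
        using pq manin_tr[OF M] dtr_B0 by simp
    qed
  qed
qed

lemma matched_manin:
  assumes MP: "matched_pair_dual br tr brs trs"
  shows "manin_triple_dual br tr brs trs (dbr br brs) (dtr tr trs)"
  unfolding manin_triple_dual_def quadratic_LY_def
proof (intro conjI allI impI)
  show "LY_algebra psc (dbr br brs) (dtr tr trs)" using MP unfolding matched_pair_dual_def .
next
  fix x y z :: "('n \<Rightarrow> 'k) \<times> ('n \<Rightarrow> 'k)"
  show "B0 (x + y) z = B0 x z + B0 y z" by simp
next
  fix c x y
  show "B0 (psc c x) y = c * B0 x y" unfolding psc_def B0_def by (simp add: algebra_simps)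
next
  fix x y :: "('n \<Rightarrow> 'k) \<times> ('n \<Rightarrow> 'k)"
  show "B0 x y = B0 y x" by (rule B0_sym)
next
  fix x :: "('n \<Rightarrow> 'k) \<times> ('n \<Rightarrow> 'k)"
  assume "\<forall>y. B0 x y = 0"
  then show "x = 0" by (intro B0_ext) (simp add: B0_def)
next
  fix p q r :: "('n \<Rightarrow> 'k) \<times> ('n \<Rightarrow> 'k)"
  obtain x \<xi> y \<eta> z \<zeta> where pq: "p = (x,\<xi>)" "q = (y,\<eta>)" "r = (z,\<zeta>)" by fastforce
  show "B0 (dbr br brs p q) r = - B0 q (dbr br brs p r)"
    using g.br_skew[of z y] d.br_skew[of \<zeta> \<eta>]
    by (simp add: pq B0_sym[of "(y,\<eta>)"] dbr_B0 Ebr_def algebra_simps)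
next
  fix p q r s :: "('n \<Rightarrow> 'k) \<times> ('n \<Rightarrow> 'k)"
  obtain x \<xi> y \<eta> z \<zeta> w \<omega> where pq: "p = (x,\<xi>)" "q = (y,\<eta>)" "r = (z,\<zeta>)" "s = (w,\<omega>)" by fastforce
  show "B0 (dtr tr trs p q r) s = B0 p (dtr tr trs s r q)"
    by (simp add: pq B0_sym[of "(x,\<xi>)"] dtr_B0 Etr_def algebra_simps)
next
  fix x y show "B0 (x, 0::'n \<Rightarrow> 'k) (y, 0) = (0::'k)" by (simp add: B0_def)
next
  fix x y show "B0 (0::'n \<Rightarrow> 'k, x) (0, y) = (0::'k)" by (simp add: B0_def)
next
  fix x y show "dbr br brs (x, 0) (y, 0) = (br x y, 0)"
    by (simp add: dbr_def d.coad_zero1 g.coad_zero2 d.br_zero1)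
next
  fix x y z show "dtr tr trs (x, 0) (y, 0) (z, 0) = (tr x y z, 0)"
    by (simp add: dtr_def d.coL_zero d.coR_zero g.coL_zero g.coR_zero d.tr_zero1)
next
  fix x y show "dbr br brs (0, x) (0, y) = (0, brs x y)"
    by (simp add: dbr_def g.coad_zero1 d.coad_zero2 g.br_zero1)
next
  fix x y z show "dtr tr trs (0, x) (0, y) (0, z) = (0, trs x y z)"
    by (simp add: dtr_def d.coL_zero d.coR_zero g.coL_zero g.coR_zero g.tr_zero1)
next
  fix x1 y1 x2 show "fst (dtr tr trs (x1, 0) (y1, 0) (0, x2)) = 0"
    by (simp add: dtr_def d.coL_zero d.coR_zero g.tr_zero3)
next
  fix x1 y1 x2 show "fst (dtr tr trs (x1, 0) (0, x2) (y1, 0)) = 0"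
    by (simp add: dtr_def d.coL_zero d.coR_zero g.tr_zero2)
next
  fix x1 x2 y2 show "snd (dtr tr trs (0, x2) (0, y2) (x1, 0)) = 0"
    by (simp add: dtr_def g.coL_zero g.coR_zero d.tr_zero3)
next
  fix x1 x2 y2 show "snd (dtr tr trs (0, x2) (x1, 0) (0, y2)) = 0"
    by (simp add: dtr_def g.coL_zero g.coR_zero d.tr_zero2)
qed

end
theorem proposition4p8:
  fixes br :: "('n::finite \<Rightarrow> 'k::field_char_0) \<Rightarrow> ('n \<Rightarrow> 'k) \<Rightarrow> ('n \<Rightarrow> 'k)"
    and tr :: "('n \<Rightarrow> 'k) \<Rightarrow> ('n \<Rightarrow> 'k) \<Rightarrow> ('n \<Rightarrow> 'k) \<Rightarrow> ('n \<Rightarrow> 'k)"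
    and brs :: "('n \<Rightarrow> 'k) \<Rightarrow> ('n \<Rightarrow> 'k) \<Rightarrow> ('n \<Rightarrow> 'k)"
    and trs :: "('n \<Rightarrow> 'k) \<Rightarrow> ('n \<Rightarrow> 'k) \<Rightarrow> ('n \<Rightarrow> 'k) \<Rightarrow> ('n \<Rightarrow> 'k)"
  assumes "LY_algebra vsc br tr"
    and "LY_algebra vsc brs trs"
  shows "(matched_pair_dual br tr brs trs \<longleftrightarrow> (\<exists>br3 tr3. manin_triple_dual br tr brs trs br3 tr3))
         \<and> (\<forall>br3 tr3. manin_triple_dual br tr brs trs br3 tr3 \<longrightarrow> br3 = dbr br brs \<and> tr3 = dtr tr trs)"
proof -
  interpret LY2 br tr brs trs using assms by (simp add: LY2_def LYa_def)
  have U: "\<forall>br3 tr3. manin_triple_dual br tr brs trs br3 tr3 \<longrightarrow> br3 = dbr br brs \<and> tr3 = dtr tr trs"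
    using manin_unique by blast
  have "matched_pair_dual br tr brs trs \<longleftrightarrow> (\<exists>br3 tr3. manin_triple_dual br tr brs trs br3 tr3)"
  proof
    assume "matched_pair_dual br tr brs trs"
    then show "\<exists>br3 tr3. manin_triple_dual br tr brs trs br3 tr3" using matched_manin by blast
  next
    assume "\<exists>br3 tr3. manin_triple_dual br tr brs trs br3 tr3"
    then obtain br3 tr3 where M: "manin_triple_dual br tr brs trs br3 tr3" by blast
    with U have "br3 = dbr br brs" "tr3 = dtr tr trs" by auto
    with M show "matched_pair_dual br tr brs trs"
      unfolding manin_triple_dual_def quadratic_LY_def matched_pair_dual_def by simp
  qed
  with U show ?thesis by blast
qed

end
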